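(* Let $\alpha$ be a partial order on a set $A$ which is a half-space, and let $\lambda$ be a linear order on $A$. Put $\alpha[\lambda]=\alpha\cup(\lambda\setminus(\alpha\cup\alpha^{-1}))$. Then $\alpha[\lambda]$ is a linear order on $A$ containing $\alpha$, and $\alpha=\alpha[\lambda]\cap\alpha[\lambda^{-1}]$.
   Context: A quasiorder on $A$ is a reflexive and transitive relation; $\Delta_A=\{(a,a)\mid a\in A\}$. A quasiorder $\alpha$ on $A$ is a half-space if there is a quasiorder $\beta$ on $A$ with $\alpha\cup\beta=A\times A$ and $\alpha\cap\beta=\Delta_A$. Linear orders are taken reflexive (antisymmetric, transitive, total). *)

theory Defs
  imports Main
begin

definition quasiorder_on :: "'a set \<Rightarrow> 'a rel \<Rightarrow> bool" where
  "quasiorder_on A r \<longleftrightarrow> r \<subseteq> A \<times> A \<and> refl_on A r \<and> trans r"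

definition partial_order_on' :: "'a set \<Rightarrow> 'a rel \<Rightarrow> bool" where
  "partial_order_on' A r \<longleftrightarrow> quasiorder_on A r \<and> antisym r"

definition linear_order_on' :: "'a set \<Rightarrow> 'a rel \<Rightarrow> bool" where
  "linear_order_on' A r \<longleftrightarrow> partial_order_on' A r \<and> total_on A r"

definition half_space :: "'a set \<Rightarrow> 'a rel \<Rightarrow> bool" where
  "half_space A \<alpha> \<longleftrightarrow> quasiorder_on A \<alpha> \<and>
     (\<exists>\<beta>. quasiorder_on A \<beta> \<and> \<alpha> \<union> \<beta> = A \<times> A \<and> \<alpha> \<inter> \<beta> = Id_on A)"

definition extend_by :: "'a rel \<Rightarrow> 'a rel \<Rightarrow> 'a rel" where
  "extend_by \<alpha> L = \<alpha> \<union> (L - (\<alpha> \<union> \<alpha>\<inverse>))"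

end

theory Submission
  imports Defs
begin

theorem proposition2p5:
  fixes A :: "'a set" and \<alpha> L :: "'a rel"
  assumes "partial_order_on' A \<alpha>"
    and "half_space A \<alpha>"
    and "linear_order_on' A L"
  shows "linear_order_on' A (extend_by \<alpha> L) \<and> \<alpha> \<subseteq> extend_by \<alpha> L \<and>
         \<alpha> = extend_by \<alpha> L \<inter> extend_by \<alpha> (L\<inverse>)"
proof -
  from assms(2) obtain \<beta> where qb: "quasiorder_on A \<beta>" and un: "\<alpha> \<union> \<beta> = A \<times> A"
    and int: "\<alpha> \<inter> \<beta> = Id_on A" unfolding half_space_def by blast
  have aA: "\<alpha> \<subseteq> A \<times> A" and ar: "refl_on A \<alpha>" and at: "trans \<alpha>" and aas: "antisym \<alpha>"
    using assms(1) unfolding partial_order_on'_def quasiorder_on_def by auto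
  have bA: "\<beta> \<subseteq> A \<times> A" and bt: "trans \<beta>"
    using qb unfolding quasiorder_on_def by auto
  have LA: "L \<subseteq> A \<times> A" and Lr: "refl_on A L" and Lt: "trans L" and Las: "antisym L"
    and Ltot: "total_on A L"
    using assms(3) unfolding linear_order_on'_def partial_order_on'_def quasiorder_on_def by auto
  have incb: "(x,y) \<in> \<beta>" if "x \<in> A" "y \<in> A" "(x,y) \<notin> \<alpha>" for x y
    using un that by (auto simp: set_eq_iff)
  have eq: "x = y" if "(x,y) \<in> \<alpha>" "(x,y) \<in> \<beta>" for x y
  proof -
    have "(x,y) \<in> Id_on A" using int that by blast
    thus ?thesis by (auto simp: Id_on_def)
  qed
  have bt': "(x,z) \<in> \<beta>" if "(x,y) \<in> \<beta>" "(y,z) \<in> \<beta>" for x y z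
    using bt that unfolding trans_def by blast
  have at': "(x,z) \<in> \<alpha>" if "(x,y) \<in> \<alpha>" "(y,z) \<in> \<alpha>" for x y z
    using at that unfolding trans_def by blast
  have Lt': "(x,z) \<in> L" if "(x,y) \<in> L" "(y,z) \<in> L" for x y z
    using Lt that unfolding trans_def by blast
  let ?E = "extend_by \<alpha> L"
  have ED: "(x,y) \<in> ?E \<longleftrightarrow> (x,y) \<in> \<alpha> \<or> ((x,y) \<in> L \<and> (x,y) \<notin> \<alpha> \<and> (y,x) \<notin> \<alpha>)" for x y
    unfolding extend_by_def by auto
  have Etr: "trans ?E"
  proof (rule transI)
    fix a b c assume ab: "(a,b) \<in> ?E" and bc: "(b,c) \<in> ?E"
    have a: "a \<in> A" and b: "b \<in> A" and c: "c \<in> A"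
      using ab bc aA LA unfolding ED by auto
    show "(a,c) \<in> ?E"
    proof (cases "(a,b) \<in> \<alpha>")
      case T1: True
      show ?thesis
      proof (cases "(b,c) \<in> \<alpha>")
        case True then show ?thesis using T1 at' ED by blast
      next
        case False
        hence bcL: "(b,c) \<in> L" "(c,b) \<notin> \<alpha>" using bc ED by auto
        show ?thesis
        proof (cases "(a,c) \<in> \<alpha>")
          case True then show ?thesis using ED by blast
        next
          case F2: False
          have "(c,a) \<notin> \<alpha>" using at' T1 bcL(2) by blast
          hence "(a,c) \<in> \<beta>" using incb a c F2 by blast
          moreover have "(c,b) \<in> \<beta>" using incb bcL b c by blast
          ultimately have "a = b" using eq T1 bt' by blast
          then show ?thesis using bc by simp
        qed
      qed
    next
      case F1: False
      hence abL: "(a,b) \<in> L" "(b,a) \<notin> \<alpha>" using ab ED by auto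
      show ?thesis
      proof (cases "(b,c) \<in> \<alpha>")
        case T2: True
        show ?thesis
        proof (cases "(a,c) \<in> \<alpha>")
          case True then show ?thesis using ED by blast
        next
          case F3: False
          have "(c,a) \<notin> \<alpha>" using at' T2 abL(2) by blast
          have "(b,a) \<in> \<beta>" using incb abL b a by blast
          moreover have "(a,c) \<in> \<beta>" using incb F3 a c by blast
          ultimately have "b = c" using eq T2 bt' by blast
          then show ?thesis using ab by simp
        qed
      next
        case F2: False
        hence bcL: "(b,c) \<in> L" "(c,b) \<notin> \<alpha>" using bc ED by auto
        have acL: "(a,c) \<in> L" using Lt' abL bcL by blast
        show ?thesis
        proof (cases "(a,c) \<in> \<alpha>")
          case True then show ?thesis using ED by blast
        next
          case F3: False
          show ?thesis
          proof (cases "(c,a) \<in> \<alpha>")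
            case True
            have "(c,b) \<in> \<beta>" using incb bcL b c by blast
            moreover have "(b,a) \<in> \<beta>" using incb abL a b by blast
            ultimately have "c = a" using eq True bt' by blast
            then show ?thesis using ar a unfolding refl_on_def ED by blast
          next
            case False then show ?thesis using F3 acL ED by blast
          qed
        qed
      qed
    qed
  qed
  have EA: "?E \<subseteq> A \<times> A" using aA LA unfolding extend_by_def by blast
  have Er: "refl_on A ?E" using ar EA unfolding refl_on_def extend_by_def by blast
  have Eas: "antisym ?E" using aas Las unfolding antisym_def extend_by_def by blast
  have Etot: "total_on A ?E" using Ltot unfolding total_on_def extend_by_def by blast
  have sub: "\<alpha> \<subseteq> ?E" unfolding extend_by_def by blast
  have "extend_by \<alpha> L \<inter> extend_by \<alpha> (L\<inverse>) \<subseteq> \<alpha>"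
  proof
    fix p assume p: "p \<in> extend_by \<alpha> L \<inter> extend_by \<alpha> (L\<inverse>)"
    obtain x y where pxy: "p = (x,y)" by (cases p)
    show "p \<in> \<alpha>"
    proof (rule ccontr)
      assume n: "p \<notin> \<alpha>"
      hence "(x,y) \<in> L" "(y,x) \<in> L" using p pxy unfolding extend_by_def by auto
      hence "x = y" "x \<in> A" using Las LA unfolding antisym_def by auto
      thus False using n pxy ar unfolding refl_on_def by auto
    qed
  qed
  thus ?thesis using Etr EA Er Eas Etot sub
    unfolding linear_order_on'_def partial_order_on'_def quasiorder_on_def extend_by_def by blast
qed

end
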